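(* In the social learning model, suppose the left tail of $G_-$ is convex and differentiable. Then the map $u_+(x)=x+D_+(x)$ is monotone increasing on $(x_1,\infty)$ for some $x_1\in\mathbb{R}$.
   Context: Social learning model. A state $\theta\in\{-1,+1\}$ is drawn with $\mathbb{P}(\theta=+1)=\mathbb{P}(\theta=-1)=1/2$. Agents $t=1,2,\dots$ receive private signals $s_t\in\mathbb{R}$ that are i.i.d. conditionally on $\theta$, with CDF $F_+$ if $\theta=+1$ and $F_-$ if $\theta=-1$; $F_+$ and $F_-$ are mutually absolutely continuous. Let $L_t=\log\frac{\mathbb{P}(\theta=+1\mid s_t)}{\mathbb{P}(\theta=-1\mid s_t)}$ be the private log-likelihood ratio, and let $G_+$, $G_-$ denote the CDFs of $L_t$ conditional on $\theta=+1$, $\theta=-1$ respectively. Signals are assumed unbounded: for every $M\in\mathbb{R}$, $\mathbb{P}(L_t>M)>0$ and $\mathbb{P}(L_t<-M)>0$. Agent $t$ observes $a_1,\dots,a_{t-1}$ and her own signal and chooses $a_t\in\{-1,+1\}$ (utility $1$ if $a_t=\theta$, else $0$). The public belief is $\mu_t=\mathbb{P}(\theta=+1\mid a_1,\dots,a_{t-1})$ and $\ell_t=\log\frac{\mu_t}{1-\mu_t}$ (so $\ell_1=0$). In equilibrium $a_t=+1$ iff $\ell_t+L_t>0$, and otherwise $a_t=-1$. Consequently $\ell_{t+1}=\ell_t+D_+(\ell_t)$ if $a_t=+1$ and $\ell_{t+1}=\ell_t+D_-(\ell_t)$ if $a_t=-1$, where $D_+(x)=\log\frac{1-G_+(-x)}{1-G_-(-x)}$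 and $D_-(x)=\log\frac{G_+(-x)}{G_-(-x)}$. We write $\mathbb{P}_+(\cdot)=\mathbb{P}(\cdot\mid\theta=+1)$ and $\mathbb{E}_+$ for the corresponding expectation. "The left tail of $G_-$ is convex and differentiable" means: there exists $x_0\in\mathbb{R}$ such that the restriction of $G_-$ to $(-\infty,x_0)$ is convex and differentiable. *)

theory Defs
  imports "HOL-Probability.Probability"
begin

text \<open>Signal distributions: Fp is the law of the signal s given theta = +1 (CDF F_+),
  Fm the law given theta = -1 (CDF F_-); both Borel probability measures on the reals.
  With the uniform prior, the private log-likelihood ratio of a signal s is
  L(s) = log (dF_+/dF_-)(s), the Radon-Nikodym derivative of Fp w.r.t. Fm.\<close>

definition priv_llr :: "real measure \<Rightarrow> real measure \<Rightarrow> real \<Rightarrow> real" where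
  "priv_llr Fp Fm s = ln (enn2real (RN_deriv Fm Fp s))"

definition Gplus :: "real measure \<Rightarrow> real measure \<Rightarrow> real \<Rightarrow> real" where
  "Gplus Fp Fm x = measure Fp {s \<in> space Fp. priv_llr Fp Fm s \<le> x}"

definition Gminus :: "real measure \<Rightarrow> real measure \<Rightarrow> real \<Rightarrow> real" where
  "Gminus Fp Fm x = measure Fm {s \<in> space Fm. priv_llr Fp Fm s \<le> x}"

definition Dplus :: "real measure \<Rightarrow> real measure \<Rightarrow> real \<Rightarrow> real" where
  "Dplus Fp Fm x = ln ((1 - Gplus Fp Fm (-x)) / (1 - Gminus Fp Fm (-x)))"

definition Dminus :: "real measure \<Rightarrow> real measure \<Rightarrow> real \<Rightarrow> real" where
  "Dminus Fp Fm x = ln (Gplus Fp Fm (-x) / Gminus Fp Fm (-x))"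

definition sig_prob :: "real measure \<Rightarrow> real measure \<Rightarrow> real set \<Rightarrow> real" where
  "sig_prob Fp Fm A = (measure Fp A + measure Fm A) / 2"

definition unbounded_signals :: "real measure \<Rightarrow> real measure \<Rightarrow> bool" where
  "unbounded_signals Fp Fm \<longleftrightarrow>
     (\<forall>M::real. sig_prob Fp Fm {s. priv_llr Fp Fm s > M} > 0 \<and>
                sig_prob Fp Fm {s. priv_llr Fp Fm s < -M} > 0)"

end

theory Submission
  imports Defs
begin

lemma llr_meas:
  assumes "sets M = sets borel" "sets Fm = sets borel"
  shows "priv_llr Fp Fm \<in> borel_measurable M"
proof -
  have "RN_deriv Fm Fp \<in> borel_measurable M"
    using borel_measurable_RN_deriv[of Fm Fp] measurable_cong_sets[of Fm M] assms by simp
  then show ?thesis unfolding priv_llr_def[abs_def] by measurable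
qed

lemma cdf_facts:
  fixes f :: "real \<Rightarrow> real" and M :: "real measure"
  assumes P: "prob_space M" and S: "sets M = sets borel" and f: "f \<in> borel_measurable M"
  shows "measure M {s\<in>space M. f s \<le> x} \<le> 1"
    and "x \<le> y \<Longrightarrow> measure M {s\<in>space M. f s \<le> x} \<le> measure M {s\<in>space M. f s \<le> y}"
    and "1 - measure M {s\<in>space M. f s \<le> x} = measure M {s. f s > x}"
proof -
  interpret prob_space M by fact
  have sp: "space M = UNIV" using sets_eq_imp_space_eq[OF S] by simp
  have m: "\<And>x. {s\<in>space M. f s \<le> x} \<in> sets M"
  proof -
    fix x
    have "f -` {..x} \<inter> space M \<in> sets M" by (intro measurable_sets[OF f]) auto
    moreover have "f -` {..x} \<inter> space M = {s\<in>space M. f s \<le> x}" by auto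
    ultimately show "{s\<in>space M. f s \<le> x} \<in> sets M" by simp
  qed
  show "measure M {s\<in>space M. f s \<le> x} \<le> 1" by simp
  show "x \<le> y \<Longrightarrow> measure M {s\<in>space M. f s \<le> x} \<le> measure M {s\<in>space M. f s \<le> y}"
    by (rule finite_measure_mono) (use m in auto)
  have "measure M (space M - {s\<in>space M. f s \<le> x}) = 1 - measure M {s\<in>space M. f s \<le> x}"
    using prob_compl[OF m] by simp
  moreover have "space M - {s\<in>space M. f s \<le> x} = {s. f s > x}" using sp by auto
  ultimately show "1 - measure M {s\<in>space M. f s \<le> x} = measure M {s. f s > x}" by simp
qed

lemma pos_tail:
  fixes f :: "real \<Rightarrow> real" and M :: "real measure"
  assumes P: "prob_space M" "prob_space N" and S: "sets M = sets borel" "sets N = sets borel"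
    and ac: "absolutely_continuous M N" and f: "f \<in> borel_measurable M"
    and pos: "(measure N A + measure M A) / 2 > 0" and A: "A = {s. f s > x}"
  shows "measure M A > 0"
proof (rule ccontr)
  assume "\<not> measure M A > 0"
  hence z: "measure M A = 0" using measure_nonneg[of M A] by linarith
  have sp: "space M = UNIV" using sets_eq_imp_space_eq[OF S(1)] by simp
  have "f -` {x<..} \<inter> space M \<in> sets M" by (intro measurable_sets[OF f]) auto
  moreover have "f -` {x<..} \<inter> space M = A" unfolding A using sp by auto
  ultimately have mA: "A \<in> sets M" by simp
  have "A \<in> null_sets M"
    using z mA finite_measure.emeasure_eq_measure[OF prob_space.finite_measure[OF P(1)], of A] by (simp add: null_sets_def)
  hence "A \<in> null_sets N" using ac unfolding absolutely_continuous_def by auto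
  hence "measure N A = 0" by (simp add: measure_def null_setsD1)
  thus False using z pos by simp
qed

theorem lemma5:
  fixes Fp Fm :: "real measure"
  assumes "prob_space Fp" and "prob_space Fm"
    and "sets Fp = sets borel" and "sets Fm = sets borel"
    and "absolutely_continuous Fm Fp" and "absolutely_continuous Fp Fm"
    and "unbounded_signals Fp Fm"
    and "\<exists>x0::real. convex_on {..<x0} (Gminus Fp Fm) \<and>
                    (\<forall>x<x0. Gminus Fp Fm differentiable at x)"
  shows "\<exists>x1::real. mono_on {x1<..} (\<lambda>x. x + Dplus Fp Fm x)"
proof -
  define P where "P = Gplus Fp Fm"
  define Q where "Q = Gminus Fp Fm"
  obtain x0 where cv: "convex_on {..<x0} Q" using assms(8) Q_def by blast
  have fp: "priv_llr Fp Fm \<in> borel_measurable Fp" using llr_meas assms(3,4) by blast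
  have fm: "priv_llr Fp Fm \<in> borel_measurable Fm" using llr_meas assms(3,4) by blast
  note cp0 = cdf_facts[OF assms(1,3) fp]
  note cm0 = cdf_facts[OF assms(2,4) fm]
  have cp2: "\<And>x y. x \<le> y \<Longrightarrow> P x \<le> P y" using cp0(2) unfolding P_def Gplus_def by blast
  have cp3: "\<And>x. 1 - P x = measure Fp {s. priv_llr Fp Fm s > x}" using cp0(3) unfolding P_def Gplus_def by blast
  have cm1: "\<And>x. Q x \<le> 1" using cm0(1) unfolding Q_def Gminus_def by blast
  have cm2: "\<And>x y. x \<le> y \<Longrightarrow> Q x \<le> Q y" using cm0(2) unfolding Q_def Gminus_def by blast
  have cm3: "\<And>x. 1 - Q x = measure Fm {s. priv_llr Fp Fm s > x}" using cm0(3) unfolding Q_def Gminus_def by blast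
  have Q0: "\<And>x. Q x \<ge> 0" unfolding Q_def Gminus_def by simp
  have Pp: "\<And>y. 1 - P y > 0"
  proof -
    fix y
    have "sig_prob Fp Fm {s. priv_llr Fp Fm s > y} > 0" using assms(7) unfolding unbounded_signals_def by blast
    hence "measure Fp {s. priv_llr Fp Fm s > y} > 0"
      by (intro pos_tail[OF assms(1,2,3,4,6) fp]) (auto simp: sig_prob_def)
    thus "1 - P y > 0" using cp3[of y] by simp
  qed
  have Qp: "\<And>y. 1 - Q y > 0"
  proof -
    fix y
    have "sig_prob Fp Fm {s. priv_llr Fp Fm s > y} > 0" using assms(7) unfolding unbounded_signals_def by blast
    hence "measure Fm {s. priv_llr Fp Fm s > y} > 0"
      by (intro pos_tail[OF assms(2,1,4,3,5) fm]) (auto simp: sig_prob_def)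
    thus "1 - Q y > 0" using cm3[of y] by simp
  qed
  define z where "z = x0 - 1"
  define c where "c = 1 - Q z"
  have c: "c > 0" using Qp c_def by simp
  define x1 where "x1 = 1/c - z"
  show ?thesis
  proof (intro exI[of _ x1] mono_onI)
    fix a b assume ab: "a \<in> {x1<..}" "b \<in> {x1<..}" "a \<le> b"
    define y1 where "y1 = -b"
    define y2 where "y2 = -a"
    have y12: "y1 \<le> y2" using ab y1_def y2_def by simp
    have y2z: "y2 < z - 1/c" using ab y2_def x1_def by simp
    have "1/c > 0" using c by simp
    hence y2z': "y2 < z" using y2z by linarith
    have "Q y2 - Q y1 \<le> (y2 - y1) / (z - y1)"
    proof -
      define t where "t = (y2 - y1) / (z - y1)"
      have t: "0 \<le> t" "t \<le> 1" using y12 y2z' unfolding t_def by auto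
      have tz: "t * (z - y1) = y2 - y1" using y12 y2z' unfolding t_def by simp
      have eq: "(1 - t) *\<^sub>R y1 + t *\<^sub>R z = y2"
        using tz by (simp add: algebra_simps)
      have zin: "z \<in> {..<x0}" using z_def by simp
      have y1in: "y1 \<in> {..<x0}" using y12 y2z' z_def by simp
      have "Q y2 \<le> (1 - t) * Q y1 + t * Q z"
        using convex_onD[OF cv t y1in zin] eq by simp
      hence "Q y2 - Q y1 \<le> t * (Q z - Q y1)" by (simp add: algebra_simps)
      also have "\<dots> \<le> t * 1" using cm1[of z] Q0[of y1] t by (intro mult_left_mono) auto
      finally show ?thesis unfolding t_def by simp
    qed
    also have "\<dots> \<le> (y2 - y1) * (1 - Q y2)"
    proof -
      have "1 - Q y2 \<ge> c" using cm2[of y2 z] y2z' c_def by simp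
      moreover have "z - y1 \<ge> 1/c" using y2z y12 by simp
      hence "1 \<le> c * (z - y1)" using c by (simp add: field_simps)
      hence "1 / (z - y1) \<le> c" using y12 y2z' by (simp add: divide_le_eq mult.commute)
      ultimately have "1 / (z - y1) \<le> 1 - Q y2" by simp
      thus ?thesis using y12 by (metis divide_inverse mult_left_mono diff_ge_0_iff_ge inverse_eq_divide)
    qed
    finally have k: "1 - Q y1 \<le> (1 - Q y2) * (1 + (y2 - y1))" by (simp add: algebra_simps)
    have "(1 - Q y2) * (1 + (y2 - y1)) \<le> (1 - Q y2) * exp (y2 - y1)"
      using Qp[of y2] exp_ge_add_one_self[of "y2 - y1"] by (intro mult_left_mono) auto
    with k have "ln (1 - Q y1) \<le> ln ((1 - Q y2) * exp (y2 - y1))"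
      using Qp[of y1] by simp
    hence lq: "ln (1 - Q y1) \<le> ln (1 - Q y2) + (y2 - y1)"
      using Qp[of y2] by (simp add: ln_mult)
    have lp: "ln (1 - P y2) \<le> ln (1 - P y1)" using cp2[OF y12] Pp by simp
    have "Dplus Fp Fm a = ln (1 - P y2) - ln (1 - Q y2)"
      unfolding Dplus_def P_def[symmetric] Q_def[symmetric] y2_def using Pp[of "-a"] Qp[of "-a"] by (simp add: ln_div)
    moreover have "Dplus Fp Fm b = ln (1 - P y1) - ln (1 - Q y1)"
      unfolding Dplus_def P_def[symmetric] Q_def[symmetric] y1_def using Pp[of "-b"] Qp[of "-b"] by (simp add: ln_div)
    ultimately show "a + Dplus Fp Fm a \<le> b + Dplus Fp Fm b"
      using lq lp y1_def y2_def by simp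
  qed
qed

end
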